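(* Let $X$ be a finite-dimensional simplicial complex satisfying: (1) for all vertices $x,y$ of $X$, $\Sigma_x\subseteq\Sigma_y$ implies $x=y$; (2) if $K$ is a simplex of $X$ and $x$ is a vertex of $X$ with $x\notin K$, then there is a maximal simplex $L$ of $X$ with $K\subseteq L$ and $x\notin L$. Then the map $\Omega\colon\mathrm{Aut}(X)\to\mathrm{Aut}(\mathcal{N}(X))$, $\Omega(\varphi)=\varphi_*$, is surjective.
   Context: For a vertex $x$ of $X$, $\Sigma_x$ is the collection of maximal simplices of $X$ containing $x$. $\mathcal{N}(X)$ is the nerve of the collection of maximal simplices of $X$ (vertices: maximal simplices of $X$; a finite set of them is a simplex iff their common intersection is non-empty). For $\varphi\in\mathrm{Aut}(X)$ (simplicial automorphisms), $\varphi_*$ is the simplicial automorphism of $\mathcal{N}(X)$ given on vertices by $\varphi_*(K)=\varphi(K)$. *)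

theory Defs
  imports Main
begin

definition vertices :: "'a set set \<Rightarrow> 'a set" where
  "vertices S = \<Union>S"

definition simplicial_complex :: "'a set set \<Rightarrow> bool" where
  "simplicial_complex S \<longleftrightarrow>
     (\<forall>s\<in>S. finite s \<and> s \<noteq> {}) \<and>
     (\<forall>s\<in>S. \<forall>t. t \<subseteq> s \<and> t \<noteq> {} \<longrightarrow> t \<in> S)"

definition finite_dimensional :: "'a set set \<Rightarrow> bool" where
  "finite_dimensional S \<longleftrightarrow> (\<exists>n::nat. \<forall>s\<in>S. card s \<le> n)"

definition maximal_simplices :: "'a set set \<Rightarrow> 'a set set" where
  "maximal_simplices S = {s \<in> S. \<not> (\<exists>t\<in>S. s \<subset> t)}"

definition Sigma_at :: "'a set set \<Rightarrow> 'a \<Rightarrow> 'a set set" where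
  "Sigma_at S x = {K \<in> maximal_simplices S. x \<in> K}"

definition nerve :: "'a set set \<Rightarrow> 'a set set set" where
  "nerve S = {F. finite F \<and> F \<noteq> {} \<and> F \<subseteq> maximal_simplices S \<and> \<Inter>F \<noteq> {}}"

definition simplicial_aut :: "'a set set \<Rightarrow> ('a \<Rightarrow> 'a) set" where
  "simplicial_aut S = {\<phi>. bij_betw \<phi> (vertices S) (vertices S) \<and>
      (\<forall>s. s \<subseteq> vertices S \<longrightarrow> (s \<in> S \<longleftrightarrow> \<phi> ` s \<in> S))}"

end

theory Submission
  imports Defs
begin

lemma sc_sub: assumes "simplicial_complex X" "s \<in> X" "t \<subseteq> s" "t \<noteq> {}" shows "t \<in> X"
proof -
  have "\<forall>s\<in>X. \<forall>t. t \<subseteq> s \<and> t \<noteq> {} \<longrightarrow> t \<in> X" using assms(1) unfolding simplicial_complex_def by (rule conjunct2)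
  thus ?thesis using assms(2-4) by blast
qed
lemma sc_ne: assumes "simplicial_complex X" "s \<in> X" shows "s \<noteq> {}" "finite s"
proof -
  have "\<forall>s\<in>X. finite s \<and> s \<noteq> {}" using assms(1) unfolding simplicial_complex_def by (rule conjunct1)
  thus "s \<noteq> {}" "finite s" using assms(2) by blast+
qed

lemma img_inv: assumes "\<And>K. K \<in> A \<Longrightarrow> f (g K) = K" shows "f ` g ` A = A"
proof -
  have "f ` g ` A = (\<lambda>K. f (g K)) ` A" by (simp add: image_image)
  also have "\<dots> = (\<lambda>K. K) ` A" by (rule image_cong) (simp_all add: assms)
  finally show ?thesis by simp
qed

lemma singleton_in: assumes "simplicial_complex X" "x \<in> vertices X" shows "{x} \<in> X"
proof -
  obtain s where s: "s \<in> X" "x \<in> s" using assms(2) unfolding vertices_def by auto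
  show ?thesis by (rule sc_sub[OF assms(1) s(1)]) (use s in auto)
qed

lemma max_simplex_in:
  assumes "simplicial_complex X" "finite_dimensional X" "s \<in> X"
  shows "\<exists>K \<in> maximal_simplices X. s \<subseteq> K"
proof -
  obtain n where n: "\<forall>t\<in>X. card t \<le> n" using assms(2) unfolding finite_dimensional_def by blast
  let ?P = "\<lambda>t. t \<in> X \<and> s \<subseteq> t"
  have "\<exists>t. ?P t \<and> (\<forall>u. ?P u \<longrightarrow> n - card t \<le> n - card u)"
    using ex_has_least_nat[of ?P s "\<lambda>t. n - card t"] assms(3) by blast
  then obtain t where t: "?P t" and tm: "\<And>u. ?P u \<Longrightarrow> n - card t \<le> n - card u" by blast
  have "t \<in> maximal_simplices X"
  proof -
    have "\<not> (\<exists>u\<in>X. t \<subset> u)"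
    proof
      assume "\<exists>u\<in>X. t \<subset> u"
      then obtain u where u: "u \<in> X" "t \<subset> u" by blast
    have fu: "finite u" using u assms(1) unfolding simplicial_complex_def by blast
    have "card t < card u" using psubset_card_mono[OF fu u(2)] .
    moreover have "card u \<le> n" using n u by blast
    moreover have "n - card t \<le> n - card u" using tm[of u] u t by blast
    ultimately show False by linarith
  qed
    thus ?thesis using t unfolding maximal_simplices_def by blast
  qed
  thus ?thesis using t by blast
qed

lemma max_props:
  assumes "simplicial_complex X" "K \<in> maximal_simplices X"
  shows "K \<in> X" "finite K" "K \<noteq> {}" "K \<subseteq> vertices X"
  using assms unfolding maximal_simplices_def simplicial_complex_def vertices_def by auto

lemma vert_nerve:
  assumes "simplicial_complex X"
  shows "vertices (nerve X) = maximal_simplices X"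
proof
  show "vertices (nerve X) \<subseteq> maximal_simplices X"
    unfolding vertices_def nerve_def by blast
  show "maximal_simplices X \<subseteq> vertices (nerve X)"
  proof
    fix K assume K: "K \<in> maximal_simplices X"
    have "{K} \<in> nerve X" using max_props[OF assms K] K unfolding nerve_def by auto
    thus "K \<in> vertices (nerve X)" unfolding vertices_def by blast
  qed
qed

lemma inter_nonempty:
  assumes K0: "K0 \<in> \<F>" "finite K0"
    and fin: "\<And>G. finite G \<Longrightarrow> G \<noteq> {} \<Longrightarrow> G \<subseteq> \<F> \<Longrightarrow> \<Inter>G \<noteq> {}"
  shows "\<Inter>\<F> \<noteq> {}"
proof -
  let ?P = "\<lambda>G. finite G \<and> K0 \<in> G \<and> G \<subseteq> \<F>"
  obtain G where G: "?P G" and Gm: "\<And>H. ?P H \<Longrightarrow> card (\<Inter>G) \<le> card (\<Inter>H)"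
    using ex_has_least_nat[of ?P "{K0}" "\<lambda>G. card (\<Inter>G)"] K0 by blast
  have ne: "\<Inter>G \<noteq> {}" using fin[of G] G by blast
  have "\<Inter>G \<subseteq> \<Inter>\<F>"
  proof
    fix z assume z: "z \<in> \<Inter>G"
    show "z \<in> \<Inter>\<F>"
    proof (rule ccontr)
      assume "z \<notin> \<Inter>\<F>"
      then obtain L where L: "L \<in> \<F>" "z \<notin> L" by blast
      have sub: "\<Inter>(insert L G) \<subset> \<Inter>G" using z L by blast
      have "finite (\<Inter>G)" using G K0(2) by (meson Inter_lower finite_subset)
      hence "card (\<Inter>(insert L G)) < card (\<Inter>G)" using psubset_card_mono sub by blast
      moreover have "card (\<Inter>G) \<le> card (\<Inter>(insert L G))" using Gm[of "insert L G"] G L by blast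
      ultimately show False by linarith
    qed
  qed
  thus ?thesis using ne by blast
qed


lemma stepA:
  assumes sc: "simplicial_complex X" and fd: "finite_dimensional X"
    and bij: "bij_betw \<chi> (maximal_simplices X) (maximal_simplices X)"
    and P: "\<And>F. finite F \<Longrightarrow> F \<noteq> {} \<Longrightarrow> F \<subseteq> maximal_simplices X \<Longrightarrow> \<Inter>F \<noteq> {} \<Longrightarrow> \<Inter>(\<chi> ` F) \<noteq> {}"
    and x: "x \<in> vertices X"
  shows "\<exists>y \<in> vertices X. \<chi> ` Sigma_at X x \<subseteq> Sigma_at X y"
proof -
  have "{x} \<in> X" using singleton_in[OF sc x] .
  then obtain K0 where K0: "K0 \<in> maximal_simplices X" "{x} \<subseteq> K0"
    using max_simplex_in[OF sc fd] by blast
  have K0S: "K0 \<in> Sigma_at X x" using K0 unfolding Sigma_at_def by blast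
  have MM: "\<chi> ` maximal_simplices X = maximal_simplices X" using bij by (simp add: bij_betw_def)
  have cK0: "\<chi> K0 \<in> maximal_simplices X" using bij K0(1) bij_betwE by blast
  have "\<Inter>(\<chi> ` Sigma_at X x) \<noteq> {}"
  proof (rule inter_nonempty[of "\<chi> K0"])
    show "\<chi> K0 \<in> \<chi> ` Sigma_at X x" using K0S by blast
    show "finite (\<chi> K0)" using max_props(2)[OF sc cK0] .
    fix G assume G: "finite G" "G \<noteq> {}" "G \<subseteq> \<chi> ` Sigma_at X x"
    then obtain F where F: "F \<subseteq> Sigma_at X x" "finite F" "G = \<chi> ` F"
      by (meson finite_subset_image)
    have "F \<noteq> {}" using F G by blast
    moreover have "F \<subseteq> maximal_simplices X" using F unfolding Sigma_at_def by blast
    moreover have "x \<in> \<Inter>F" using F unfolding Sigma_at_def by blast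
    ultimately have "\<Inter>(\<chi> ` F) \<noteq> {}" using P[of F] F(2) by blast
    thus "\<Inter>G \<noteq> {}" using F(3) by simp
  qed
  then obtain y where y: "y \<in> \<Inter>(\<chi> ` Sigma_at X x)" by blast
  have sub: "\<chi> ` Sigma_at X x \<subseteq> maximal_simplices X" using MM unfolding Sigma_at_def by blast
  have "y \<in> \<chi> K0" using y K0S by blast
  hence "y \<in> vertices X" using max_props(4)[OF sc cK0] by blast
  moreover have "\<chi> ` Sigma_at X x \<subseteq> Sigma_at X y" using sub y unfolding Sigma_at_def by blast
  ultimately show ?thesis by blast
qed

lemma stepB:
  assumes sc: "simplicial_complex X" and fd: "finite_dimensional X"
    and sep: "\<And>x y. x \<in> vertices X \<Longrightarrow> y \<in> vertices X \<Longrightarrow>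
            Sigma_at X x \<subseteq> Sigma_at X y \<Longrightarrow> x = y"
    and bij: "bij_betw \<chi> (maximal_simplices X) (maximal_simplices X)"
    and bij': "bij_betw \<chi>' (maximal_simplices X) (maximal_simplices X)"
    and inv1: "\<And>K. K \<in> maximal_simplices X \<Longrightarrow> \<chi>' (\<chi> K) = K"
    and inv2: "\<And>K. K \<in> maximal_simplices X \<Longrightarrow> \<chi> (\<chi>' K) = K"
    and P: "\<And>F. finite F \<Longrightarrow> F \<noteq> {} \<Longrightarrow> F \<subseteq> maximal_simplices X \<Longrightarrow> \<Inter>F \<noteq> {} \<Longrightarrow> \<Inter>(\<chi> ` F) \<noteq> {}"
    and P': "\<And>F. finite F \<Longrightarrow> F \<noteq> {} \<Longrightarrow> F \<subseteq> maximal_simplices X \<Longrightarrow> \<Inter>F \<noteq> {} \<Longrightarrow> \<Inter>(\<chi>' ` F) \<noteq> {}"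
    and x: "x \<in> vertices X"
  shows "\<exists>y \<in> vertices X. Sigma_at X y = \<chi> ` Sigma_at X x"
proof -
  obtain y where y: "y \<in> vertices X" "\<chi> ` Sigma_at X x \<subseteq> Sigma_at X y"
    using stepA[OF sc fd bij P x] by blast
  obtain z where z: "z \<in> vertices X" "\<chi>' ` Sigma_at X y \<subseteq> Sigma_at X z"
    using stepA[OF sc fd bij' P' y(1)] by blast
  have SM: "\<And>w. Sigma_at X w \<subseteq> maximal_simplices X" unfolding Sigma_at_def by blast
  have "Sigma_at X x \<subseteq> \<chi>' ` Sigma_at X y"
  proof
    fix K assume K: "K \<in> Sigma_at X x"
    hence "K = \<chi>' (\<chi> K)" using inv1 SM by blast
    thus "K \<in> \<chi>' ` Sigma_at X y" using K y(2) by blast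
  qed
  hence "Sigma_at X x \<subseteq> Sigma_at X z" using z by blast
  hence "x = z" by (rule sep[OF x z(1)])
  have "Sigma_at X y \<subseteq> \<chi> ` Sigma_at X x"
  proof
    fix L assume L: "L \<in> Sigma_at X y"
    hence "L = \<chi> (\<chi>' L)" using inv2 SM by blast
    moreover have "\<chi>' L \<in> Sigma_at X x" using L z \<open>x = z\<close> by blast
    ultimately show "L \<in> \<chi> ` Sigma_at X x" by blast
  qed
  thus ?thesis using y by blast
qed


theorem proposition3p9:
  fixes X :: "'a set set"
  assumes "simplicial_complex X"
    and "finite_dimensional X"
    and "\<And>x y. x \<in> vertices X \<Longrightarrow> y \<in> vertices X \<Longrightarrow>
            Sigma_at X x \<subseteq> Sigma_at X y \<Longrightarrow> x = y"
    and "\<And>K x. K \<in> X \<Longrightarrow> x \<in> vertices X \<Longrightarrow> x \<notin> K \<Longrightarrow>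
            \<exists>L \<in> maximal_simplices X. K \<subseteq> L \<and> x \<notin> L"
  shows "\<forall>\<psi> \<in> simplicial_aut (nerve X). \<exists>\<phi> \<in> simplicial_aut X.
            \<forall>K \<in> maximal_simplices X. \<psi> K = \<phi> ` K"
proof
  note sc = assms(1) and fd = assms(2) and sep = assms(3)
  fix \<psi> assume \<psi>: "\<psi> \<in> simplicial_aut (nerve X)"
  define M where "M = maximal_simplices X"
  have \<psi>d: "bij_betw \<psi> (vertices (nerve X)) (vertices (nerve X)) \<and>
      (\<forall>s. s \<subseteq> vertices (nerve X) \<longrightarrow> (s \<in> nerve X \<longleftrightarrow> \<psi> ` s \<in> nerve X))"
    using \<psi> unfolding simplicial_aut_def by (rule CollectD)
  have VN: "vertices (nerve X) = M" unfolding M_def by (rule vert_nerve[OF sc])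
  have bij: "bij_betw \<psi> M M" using conjunct1[OF \<psi>d] unfolding VN .
  have iff: "\<And>s. s \<subseteq> M \<Longrightarrow> (s \<in> nerve X \<longleftrightarrow> \<psi> ` s \<in> nerve X)"
    using conjunct2[OF \<psi>d] unfolding VN by blast
  define \<psi>' where "\<psi>' = inv_into M \<psi>"
  have bij': "bij_betw \<psi>' M M" unfolding \<psi>'_def using bij by (rule bij_betw_inv_into)
  have inj: "inj_on \<psi> M" using bij by (rule bij_betw_imp_inj_on)
  have im: "\<psi> ` M = M" using bij by (rule bij_betw_imp_surj_on)
  have inv1: "\<And>K. K \<in> M \<Longrightarrow> \<psi>' (\<psi> K) = K" unfolding \<psi>'_def using inj by (rule inv_into_f_f)
  have inv2: "\<And>K. K \<in> M \<Longrightarrow> \<psi> (\<psi>' K) = K" unfolding \<psi>'_def using im by (metis f_inv_into_f)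
  have P: "\<And>F. finite F \<Longrightarrow> F \<noteq> {} \<Longrightarrow> F \<subseteq> M \<Longrightarrow> \<Inter>F \<noteq> {} \<Longrightarrow> \<Inter>(\<psi> ` F) \<noteq> {}"
  proof -
    fix F assume F: "finite F" "F \<noteq> {}" "F \<subseteq> M" "\<Inter>F \<noteq> {}"
    have "F \<in> nerve X" unfolding nerve_def using F by (simp add: M_def)
    hence "\<psi> ` F \<in> nerve X" using iff F(3) by blast
    thus "\<Inter>(\<psi> ` F) \<noteq> {}" unfolding nerve_def by simp
  qed
  have P': "\<And>F. finite F \<Longrightarrow> F \<noteq> {} \<Longrightarrow> F \<subseteq> M \<Longrightarrow> \<Inter>F \<noteq> {} \<Longrightarrow> \<Inter>(\<psi>' ` F) \<noteq> {}"
  proof -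
    fix F assume F: "finite F" "F \<noteq> {}" "F \<subseteq> M" "\<Inter>F \<noteq> {}"
    have GM: "\<psi>' ` F \<subseteq> M" using bij_betwE[OF bij'] F(3) by blast
    have "\<psi> ` (\<psi>' ` F) = F" by (rule img_inv) (use inv2 F(3) in blast)
    hence "\<psi> ` (\<psi>' ` F) \<in> nerve X" using F unfolding nerve_def M_def by simp
    hence "\<psi>' ` F \<in> nerve X" using iff[OF GM] by blast
    thus "\<Inter>(\<psi>' ` F) \<noteq> {}" unfolding nerve_def by simp
  qed
  have ex: "\<And>x. x \<in> vertices X \<Longrightarrow> \<exists>y \<in> vertices X. Sigma_at X y = \<psi> ` Sigma_at X x"
    by (rule stepB[OF sc fd sep bij[unfolded M_def] bij'[unfolded M_def]
       inv1[unfolded M_def] inv2[unfolded M_def] P[unfolded M_def] P'[unfolded M_def]])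
  have ex': "\<And>x. x \<in> vertices X \<Longrightarrow> \<exists>y \<in> vertices X. Sigma_at X y = \<psi>' ` Sigma_at X x"
    by (rule stepB[OF sc fd sep bij'[unfolded M_def] bij[unfolded M_def]
       inv2[unfolded M_def] inv1[unfolded M_def] P'[unfolded M_def] P[unfolded M_def]])
  define \<phi> where "\<phi> x = (SOME y. y \<in> vertices X \<and> Sigma_at X y = \<psi> ` Sigma_at X x)" for x
  have \<phi>: "\<And>x. x \<in> vertices X \<Longrightarrow> \<phi> x \<in> vertices X \<and> Sigma_at X (\<phi> x) = \<psi> ` Sigma_at X x"
    unfolding \<phi>_def by (rule someI_ex) (use ex in blast)
  have SM: "\<And>w. Sigma_at X w \<subseteq> M" unfolding Sigma_at_def M_def by blast
  have seq: "\<And>x y. x \<in> vertices X \<Longrightarrow> y \<in> vertices X \<Longrightarrow> Sigma_at X x = Sigma_at X y \<Longrightarrow> x = y"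
    using sep by blast
  have injphi: "inj_on \<phi> (vertices X)"
  proof (rule inj_onI)
    fix x1 x2 assume x: "x1 \<in> vertices X" "x2 \<in> vertices X" "\<phi> x1 = \<phi> x2"
    hence "\<psi> ` Sigma_at X x1 = \<psi> ` Sigma_at X x2" using \<phi> by metis
    hence "Sigma_at X x1 = Sigma_at X x2" using inj SM by (meson inj_on_image_eq_iff)
    thus "x1 = x2" using seq x by blast
  qed
  have surj: "\<phi> ` vertices X = vertices X"
  proof
    show "\<phi> ` vertices X \<subseteq> vertices X" using \<phi> by blast
    show "vertices X \<subseteq> \<phi> ` vertices X"
    proof
      fix y assume y: "y \<in> vertices X"
      obtain x where x: "x \<in> vertices X" "Sigma_at X x = \<psi>' ` Sigma_at X y" using ex'[OF y] by blast
      have "Sigma_at X (\<phi> x) = \<psi> ` \<psi>' ` Sigma_at X y" using \<phi>[OF x(1)] x(2) by simp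
      also have "\<dots> = Sigma_at X y" by (rule img_inv) (use inv2 SM in blast)
      finally have "\<phi> x = y" using seq \<phi>[OF x(1)] y by blast
      thus "y \<in> \<phi> ` vertices X" using x by blast
    qed
  qed
  have bphi: "bij_betw \<phi> (vertices X) (vertices X)" using injphi surj bij_betw_def by blast
  have memb: "\<And>K x. K \<in> M \<Longrightarrow> x \<in> vertices X \<Longrightarrow> (x \<in> K \<longleftrightarrow> \<phi> x \<in> \<psi> K)"
  proof -
    fix K x assume K: "K \<in> M" and x: "x \<in> vertices X"
    have "x \<in> K \<longleftrightarrow> K \<in> Sigma_at X x" using K unfolding Sigma_at_def M_def by blast
    also have "\<dots> \<longleftrightarrow> \<psi> K \<in> \<psi> ` Sigma_at X x" using inj K SM by (meson inj_on_image_mem_iff)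
    also have "\<dots> \<longleftrightarrow> \<psi> K \<in> Sigma_at X (\<phi> x)" using \<phi>[OF x] by simp
    also have "\<dots> \<longleftrightarrow> \<phi> x \<in> \<psi> K" using K im unfolding Sigma_at_def M_def by blast
    finally show "x \<in> K \<longleftrightarrow> \<phi> x \<in> \<psi> K" .
  qed
  have img: "\<And>K. K \<in> M \<Longrightarrow> \<psi> K = \<phi> ` K"
  proof -
    fix K assume K: "K \<in> M"
    have KV: "K \<subseteq> vertices X" using max_props(4)[OF sc] K unfolding M_def by blast
    have pKM: "\<psi> K \<in> M" using K im by blast
    have pKV: "\<psi> K \<subseteq> vertices X" using max_props(4)[OF sc] pKM unfolding M_def by blast
    show "\<psi> K = \<phi> ` K"
    proof
      show "\<phi> ` K \<subseteq> \<psi> K" using memb[OF K] KV by blast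
      show "\<psi> K \<subseteq> \<phi> ` K"
      proof
        fix y assume y: "y \<in> \<psi> K"
        then obtain x where x: "x \<in> vertices X" "y = \<phi> x" using pKV surj by blast
        thus "y \<in> \<phi> ` K" using memb[OF K x(1)] y by blast
      qed
    qed
  qed
  have simp: "\<forall>s. s \<subseteq> vertices X \<longrightarrow> (s \<in> X \<longleftrightarrow> \<phi> ` s \<in> X)"
  proof (intro allI impI iffI)
    fix s assume sV: "s \<subseteq> vertices X"
    {
      assume s: "s \<in> X"
      obtain K where K: "K \<in> M" "s \<subseteq> K" using max_simplex_in[OF sc fd s] unfolding M_def by blast
      have "\<psi> K \<in> M" using K im by blast
      hence "\<psi> K \<in> X" using max_props(1)[OF sc] unfolding M_def by blast
      moreover have "\<phi> ` s \<subseteq> \<psi> K" using img[OF K(1)] K(2) by blast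
      moreover have "s \<noteq> {}" using sc_ne[OF sc s] by blast
      ultimately show "\<phi> ` s \<in> X" using sc_sub[OF sc] by blast
    }
    {
      assume s: "\<phi> ` s \<in> X"
      obtain L where L: "L \<in> M" "\<phi> ` s \<subseteq> L" using max_simplex_in[OF sc fd s] unfolding M_def by blast
      have K: "\<psi>' L \<in> M" using bij' L(1) bij_betwE by blast
      have "L = \<phi> ` (\<psi>' L)" using img[OF K] inv2[OF L(1)] by simp
      moreover have KV: "\<psi>' L \<subseteq> vertices X" using max_props(4)[OF sc] K unfolding M_def by blast
      ultimately have "s \<subseteq> \<psi>' L"
      proof -
        assume Leq: "L = \<phi> ` (\<psi>' L)" and KV: "\<psi>' L \<subseteq> vertices X"
        show "s \<subseteq> \<psi>' L"
        proof
          fix x assume x: "x \<in> s"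
          hence "\<phi> x \<in> \<phi> ` (\<psi>' L)" using L(2) Leq by blast
          thus "x \<in> \<psi>' L" using inj_on_image_mem_iff[OF injphi _ KV] sV x by blast
        qed
      qed
      moreover have "s \<noteq> {}" using sc_ne[OF sc s] by blast
      moreover have "\<psi>' L \<in> X" using max_props(1)[OF sc] K unfolding M_def by blast
      ultimately show "s \<in> X" using sc_sub[OF sc] by blast
    }
  qed
  have "\<phi> \<in> simplicial_aut X" unfolding simplicial_aut_def using bphi simp by blast
  thus "\<exists>\<phi> \<in> simplicial_aut X. \<forall>K \<in> maximal_simplices X. \<psi> K = \<phi> ` K"
    using img unfolding M_def by blast
qed

end
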